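(* Let $X,Y$ be nonempty compact Hausdorff spaces, $E\neq\{0_E\}$ a complex locally convex space, and $T:C(X,E)\to C(Y,E)$ a map with $\operatorname{Ran}(TF-TG)\subset\operatorname{Ran}(F-G)$ for all $F,G\in C(X,E)$ and $T(1\otimes 0_E)=1\otimes 0_E$. Then for all $f,g\in C(X)$ and $u,v\in E$, $$T(f\otimes u+g\otimes v)=T(f\otimes u)+T(g\otimes v).$$
   Context: $C(X,E)$ is the vector space of continuous functions $X\to E$; $\operatorname{Ran}(F)=\{F(x):x\in X\}$; for $f\in C(X)$ and $u\in E$, $f\otimes u$ denotes $x\mapsto f(x)u$, and $1\otimes 0_E$ is the constant function with value $0_E$. *)

theory Defs
  imports "HOL-Analysis.Analysis"
begin

definition complex_convex :: "(complex \<Rightarrow> 'e::ab_group_add \<Rightarrow> 'e) \<Rightarrow> 'e set \<Rightarrow> bool" where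
  "complex_convex smul V \<longleftrightarrow>
     (\<forall>x\<in>V. \<forall>y\<in>V. \<forall>t::real. 0 \<le> t \<and> t \<le> 1 \<longrightarrow>
        smul (complex_of_real t) x + smul (complex_of_real (1 - t)) y \<in> V)"

definition complex_lcs :: "(complex \<Rightarrow> 'e::{ab_group_add, t2_space} \<Rightarrow> 'e) \<Rightarrow> bool" where
  "complex_lcs smul \<longleftrightarrow>
     vector_space smul \<and>
     continuous_on UNIV (\<lambda>(x::'e, y::'e). x + y) \<and>
     continuous_on UNIV (\<lambda>(c::complex, x::'e). smul c x) \<and>
     (\<forall>U. open U \<and> (0::'e) \<in> U \<longrightarrow>
        (\<exists>V. open V \<and> 0 \<in> V \<and> V \<subseteq> U \<and> complex_convex smul V))"

end

theory Submission
  imports Defs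
begin

lemma scalar_add:
  fixes \<psi> :: "('x::topological_space \<Rightarrow> complex) \<Rightarrow> complex"
  assumes P: "\<And>h k. continuous_on UNIV h \<Longrightarrow> continuous_on UNIV k \<Longrightarrow> \<exists>x. \<psi> h - \<psi> k = h x - k x"
    and Z: "\<psi> (\<lambda>x. 0) = 0"
    and a: "continuous_on UNIV a" and b: "continuous_on UNIV b"
  shows "\<psi> (\<lambda>x. a x + b x) = \<psi> a + \<psi> b"
proof -
  have R: "\<exists>x. \<psi> h = h x" if "continuous_on UNIV h" for h
    using P[OF that continuous_on_const[of UNIV 0]] Z by simp
  define C where "C r = (\<lambda>x. complex_of_real (r x))" for r :: "'x \<Rightarrow> real"
  have cC: "continuous_on UNIV (C r)" if "continuous_on UNIV r" for r
    unfolding C_def using that by (intro continuous_intros)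
  have cI: "continuous_on UNIV (\<lambda>x. \<i> * C r x)" if "continuous_on UNIV r" for r
    using cC[OF that] by (intro continuous_intros)
  have s2: "\<psi> (\<lambda>x. C r x + \<i> * C s x) = \<psi> (C r) + \<psi> (\<lambda>x. \<i> * C s x)"
    if r: "continuous_on UNIV r" and s: "continuous_on UNIV s" for r s
  proof -
    have c1: "continuous_on UNIV (\<lambda>x. C r x + \<i> * C s x)" using cC[OF r] cC[OF s] by (intro continuous_intros)
    obtain x1 where x1: "\<psi> (\<lambda>x. C r x + \<i> * C s x) - \<psi> (C r) = \<i> * C s x1" using P[OF c1 cC[OF r]] by auto
    obtain x2 where x2: "\<psi> (\<lambda>x. C r x + \<i> * C s x) - \<psi> (\<lambda>x. \<i> * C s x) = C r x2" using P[OF c1 cI[OF s]] by auto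
    obtain x3 where x3: "\<psi> (C r) = C r x3" using R[OF cC[OF r]] by auto
    obtain x4 where x4: "\<psi> (\<lambda>x. \<i> * C s x) = \<i> * C s x4" using R[OF cI[OF s]] by auto
    have "r x3 = r x2" using x1 x2 x3 x4 unfolding C_def by (simp add: complex_eq_iff algebra_simps)
    then show ?thesis using x2 x3 unfolding C_def by (simp add: algebra_simps)
  qed
  have s3: "\<psi> (\<lambda>x. \<i> * C s x) = \<i> * \<psi> (C s)" if s: "continuous_on UNIV s" for s
  proof -
    obtain x1 where x1: "\<psi> (\<lambda>x. \<i> * C s x) - \<psi> (C s) = \<i> * C s x1 - C s x1" using P[OF cI[OF s] cC[OF s]] by auto
    obtain x3 where x3: "\<psi> (C s) = C s x3" using R[OF cC[OF s]] by auto
    obtain x4 where x4: "\<psi> (\<lambda>x. \<i> * C s x) = \<i> * C s x4" using R[OF cI[OF s]] by auto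
    have "s x3 = s x4" using x1 x3 x4 unfolding C_def by (simp add: complex_eq_iff algebra_simps)
    then show ?thesis using x3 x4 unfolding C_def by simp
  qed
  have s4: "\<psi> (C (\<lambda>x. r x + s x)) = \<psi> (C r) + \<psi> (C s)"
    if r: "continuous_on UNIV r" and s: "continuous_on UNIV s" for r s
  proof -
    have crs: "continuous_on UNIV (\<lambda>x. r x + s x)" using r s by (intro continuous_intros)
    have c1: "continuous_on UNIV (\<lambda>x. C r x + \<i> * C s x)" using cC[OF r] cC[OF s] by (intro continuous_intros)
    obtain x1 where x1: "\<psi> (C (\<lambda>x. r x + s x)) - \<psi> (\<lambda>x. C r x + \<i> * C s x)
        = C (\<lambda>x. r x + s x) x1 - (C r x1 + \<i> * C s x1)" using P[OF cC[OF crs] c1] by auto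
    obtain x3 where x3: "\<psi> (C r) = C r x3" using R[OF cC[OF r]] by auto
    obtain x4 where x4: "\<psi> (C s) = C s x4" using R[OF cC[OF s]] by auto
    obtain x5 where x5: "\<psi> (C (\<lambda>x. r x + s x)) = C (\<lambda>x. r x + s x) x5" using R[OF cC[OF crs]] by auto
    have e: "\<psi> (\<lambda>x. C r x + \<i> * C s x) = C r x3 + \<i> * C s x4" using s2[OF r s] s3[OF s] x3 x4 by simp
    show ?thesis using x1 x3 x4 x5 e unfolding C_def by (simp add: complex_eq_iff algebra_simps)
  qed
  define ar where "ar = (\<lambda>x. Re (a x))"
  define ai where "ai = (\<lambda>x. Im (a x))"
  define br where "br = (\<lambda>x. Re (b x))"
  define bi where "bi = (\<lambda>x. Im (b x))"
  have cs: "continuous_on UNIV ar" "continuous_on UNIV ai" "continuous_on UNIV br" "continuous_on UNIV bi"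
    unfolding ar_def ai_def br_def bi_def using a b by (auto intro!: continuous_intros)
  have dec: "h = (\<lambda>x. C (\<lambda>x. Re (h x)) x + \<i> * C (\<lambda>x. Im (h x)) x)" for h :: "'x \<Rightarrow> complex"
    unfolding C_def by (simp add: fun_eq_iff complex_eq_iff)
  have ea: "\<psi> a = \<psi> (C ar) + \<i> * \<psi> (C ai)"
    using dec[of a] s2[OF cs(1,2)] s3[OF cs(2)] unfolding ar_def ai_def by metis
  have eb: "\<psi> b = \<psi> (C br) + \<i> * \<psi> (C bi)"
    using dec[of b] s2[OF cs(3,4)] s3[OF cs(4)] unfolding br_def bi_def by metis
  have c5: "continuous_on UNIV (\<lambda>x. ar x + br x)" "continuous_on UNIV (\<lambda>x. ai x + bi x)"
    using cs by (auto intro!: continuous_intros)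
  have "(\<lambda>x. a x + b x) = (\<lambda>x. C (\<lambda>x. ar x + br x) x + \<i> * C (\<lambda>x. ai x + bi x) x)"
    unfolding C_def ar_def ai_def br_def bi_def by (simp add: fun_eq_iff complex_eq_iff)
  then have "\<psi> (\<lambda>x. a x + b x) = \<psi> (C (\<lambda>x. ar x + br x)) + \<i> * \<psi> (C (\<lambda>x. ai x + bi x))"
    using s2[OF c5] s3[OF c5(2)] by simp
  then show ?thesis using ea eb s4[OF cs(1,3)] s4[OF cs(2,4)] by (simp add: algebra_simps)
qed

theorem lemma4p4:
  fixes smul :: "complex \<Rightarrow> 'e::{ab_group_add, t2_space} \<Rightarrow> 'e"
    and T :: "('x::t2_space \<Rightarrow> 'e) \<Rightarrow> ('y::t2_space \<Rightarrow> 'e)"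
  assumes cX: "compact (UNIV :: 'x set)"
    and cY: "compact (UNIV :: 'y set)"
    and E: "complex_lcs smul"
    and nontriv: "\<exists>w::'e. w \<noteq> 0"
    and Tmaps: "\<And>F. continuous_on UNIV F \<Longrightarrow> continuous_on UNIV (T F)"
    and Tran: "\<And>F G. continuous_on UNIV F \<Longrightarrow> continuous_on UNIV G \<Longrightarrow>
                 range (\<lambda>y. T F y - T G y) \<subseteq> range (\<lambda>x. F x - G x)"
    and T0: "T (\<lambda>x. 0) = (\<lambda>y. 0)"
    and f: "continuous_on UNIV (f :: 'x \<Rightarrow> complex)"
    and g: "continuous_on UNIV (g :: 'x \<Rightarrow> complex)"
  shows "T (\<lambda>x. smul (f x) u + smul (g x) v)
           = (\<lambda>y. T (\<lambda>x. smul (f x) u) y + T (\<lambda>x. smul (g x) v) y)"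
proof -
  interpret vs: vector_space smul using E unfolding complex_lcs_def by auto
  have cadd: "continuous_on UNIV (\<lambda>(x::'e, y::'e). x + y)"
   and csm: "continuous_on UNIV (\<lambda>(c::complex, x::'e). smul c x)"
    using E unfolding complex_lcs_def by auto
  have sm: "continuous_on UNIV (\<lambda>x. smul (h x) w)" if "continuous_on UNIV h" for h :: "'x \<Rightarrow> complex" and w
  proof -
    have "continuous_on UNIV (\<lambda>x. (h x, w))" using that by (intro continuous_intros)
    then have "continuous_on UNIV ((\<lambda>(c::complex, x::'e). smul c x) \<circ> (\<lambda>x. (h x, w)))"
      by (rule continuous_on_compose) (rule continuous_on_subset[OF csm], simp)
    then show ?thesis by (simp add: o_def)
  qed
  have ad: "continuous_on UNIV (\<lambda>x. F x + G x)" if "continuous_on UNIV F" "continuous_on UNIV G" for F G :: "'x \<Rightarrow> 'e"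
  proof -
    have "continuous_on UNIV (\<lambda>x. (F x, G x))" using that by (intro continuous_intros)
    then have "continuous_on UNIV ((\<lambda>(x::'e, y::'e). x + y) \<circ> (\<lambda>x. (F x, G x)))"
      by (rule continuous_on_compose) (rule continuous_on_subset[OF cadd], simp)
    then show ?thesis by (simp add: o_def)
  qed
  have TD: "\<exists>x. T F y - T G y = F x - G x" if "continuous_on UNIV F" "continuous_on UNIV G" for F G y
    using Tran[OF that] by blast
  have c0: "continuous_on UNIV (\<lambda>x::'x. 0::'e)" by simp
  have TD0: "\<exists>x. T F y = F x" if "continuous_on UNIV F" for F y
    using TD[OF that c0, of y] T0 by simp
  have cf: "continuous_on UNIV (\<lambda>x. smul (f x) u)" using sm[OF f] .
  have cg: "continuous_on UNIV (\<lambda>x. smul (g x) v)" using sm[OF g] .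
  have cH: "continuous_on UNIV (\<lambda>x. smul (f x) u + smul (g x) v)" using ad[OF cf cg] .
  show ?thesis
  proof (cases "v = 0")
    case True
    then show ?thesis using T0 by simp
  next
    case vnz: False
    show ?thesis
    proof (cases "\<exists>c. u = smul c v")
      case True
      then obtain c where uc: "u = smul c v" by auto
      show ?thesis
      proof
        fix y
        define \<psi> where "\<psi> h = (THE d. T (\<lambda>x. smul (h x) v) y = smul d v)" for h
        have psi: "T (\<lambda>x. smul (h x) v) y = smul (\<psi> h) v" if ch: "continuous_on UNIV h" for h
        proof -
          obtain x where x: "T (\<lambda>x. smul (h x) v) y = smul (h x) v" using TD0[OF sm[OF ch, of v], of y] by auto
          have "\<psi> h = h x" unfolding \<psi>_def
            by (rule the_equality) (use x vnz in auto)
          then show ?thesis using x by simp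
        qed
        have P: "\<exists>x. \<psi> h - \<psi> k = h x - k x" if ch: "continuous_on UNIV h" and ck: "continuous_on UNIV k" for h k
        proof -
          obtain x where x: "T (\<lambda>x. smul (h x) v) y - T (\<lambda>x. smul (k x) v) y = smul (h x) v - smul (k x) v"
            using TD[OF sm[OF ch, of v] sm[OF ck, of v], of y] by auto
          then have "smul (\<psi> h - \<psi> k) v = smul (h x - k x) v"
            using psi[OF ch] psi[OF ck] by (simp add: vs.scale_left_diff_distrib)
          then show ?thesis using vnz by auto
        qed
        have Z: "\<psi> (\<lambda>x. 0) = 0" using psi[of "\<lambda>x. 0"] T0 vnz by simp
        have cfc: "continuous_on UNIV (\<lambda>x. f x * c)" using f by (intro continuous_intros)
        have e1: "(\<lambda>x. smul (f x) u + smul (g x) v) = (\<lambda>x. smul (f x * c + g x) v)"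
          by (simp add: uc vs.scale_left_distrib)
        have e2: "(\<lambda>x. smul (f x) u) = (\<lambda>x. smul (f x * c) v)"
          by (simp add: uc)
        show "T (\<lambda>x. smul (f x) u + smul (g x) v) y = T (\<lambda>x. smul (f x) u) y + T (\<lambda>x. smul (g x) v) y"
          unfolding e1 e2
          using psi[OF cfc] psi[OF g] psi[OF continuous_on_add[OF cfc g]] scalar_add[of \<psi>, OF P Z cfc g]
          by (simp add: vs.scale_left_distrib)
      qed
    next
      case False
      have ind: "a = 0 \<and> b = 0" if ab: "smul a u = smul b v" for a b
      proof -
        have "a = 0"
        proof (rule ccontr)
          assume "a \<noteq> 0"
          have "smul (inverse a) (smul a u) = smul (inverse a) (smul b v)" using ab by simp
          then have "u = smul (inverse a * b) v" using \<open>a \<noteq> 0\<close> by simp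
          then show False using False by auto
        qed
        then show ?thesis using ab vnz by simp
      qed
      show ?thesis
      proof
        fix y
        obtain x1 where x1: "T (\<lambda>x. smul (f x) u + smul (g x) v) y - T (\<lambda>x. smul (f x) u) y = smul (g x1) v"
          using TD[OF cH cf, of y] by auto
        obtain x2 where x2: "T (\<lambda>x. smul (f x) u + smul (g x) v) y - T (\<lambda>x. smul (g x) v) y = smul (f x2) u"
          using TD[OF cH cg, of y] by auto
        obtain x3 where x3: "T (\<lambda>x. smul (f x) u) y = smul (f x3) u" using TD0[OF cf] by auto
        obtain x4 where x4: "T (\<lambda>x. smul (g x) v) y = smul (g x4) v" using TD0[OF cg] by auto
        have h1: "T (\<lambda>x. smul (f x) u + smul (g x) v) y = smul (g x1) v + smul (f x3) u"
          using x1 x3 by (simp add: diff_eq_eq)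
        have h2: "T (\<lambda>x. smul (f x) u + smul (g x) v) y = smul (f x2) u + smul (g x4) v"
          using x2 x4 by (simp add: diff_eq_eq)
        have "smul (f x3) u + smul (g x1) v = smul (g x4) v + smul (f x2) u"
          using h1 h2 by (simp add: algebra_simps)
        then have "smul (f x3 - f x2) u = smul (g x4 - g x1) v"
          by (simp add: vs.scale_left_diff_distrib algebra_simps)
        then have "f x3 - f x2 = 0" by (rule ind[THEN conjunct1])
        then have "f x3 = f x2" by simp
        then show "T (\<lambda>x. smul (f x) u + smul (g x) v) y = T (\<lambda>x. smul (f x) u) y + T (\<lambda>x. smul (g x) v) y"
          using h2 x3 x4 by (simp add: add.commute)
      qed
    qed
  qed
qed

end
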